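(* For any symmetric design $P$: (1) $C_d$ is completely symmetric; (2) $\mathrm{tr}(C_d)=q_d^*$; (3) moreover, for any design $P$ (not necessarily symmetric) there exists a symmetric design with the same value of $q_d^*$.
   Context: Fix integers $p,t\ge2$, $n\ge1$ and a probability vector $\vec a=(a_1,\dots,a_p)$. Write $a_{jk}=\sum_{i=j}^ka_i$ ($a_{1,0}=0$, $a_{p+1,p}=0$), $\alpha_k=n^{-1}((n+1)a_k+a_{1,k-1}^{n+1}-a_{1k}^{n+1})$, $\beta_k=a_k+a_{k+1,p}a_{1k}^n-a_{kp}a_{1,k-1}^n$. $J_k$ is the $k\times k$ all-ones matrix, $B_k=I_k-J_k/k$, $B^k_p$ the $p\times p$ matrix with $B_k$ in its upper-left $k\times k$ block and zeros elsewhere; $A=\sum_k\alpha_kB^k_p$, $B=\sum_k\beta_kB^k_p$. $\mathcal S=\{1,\dots,t\}^p$; for $s=(t_1,\dots,t_p)$, $T_s$ is the $p\times t$ matrix with $(k,i)$ entry $1$ iff $t_k=i$, and $F_s$ the $p\times t$ matrix with zero first row and $(k,i)$ entry $1$ iff $t_{k-1}=i$ ($k\ge2$). A design is a probability vector $P=(p_s)_{s\in\mathcal S}$. With $\bar T=\sum_sp_sT_s$, $\bar F=\sum_sp_sF_s$: $C_{d11}=n(\sum_sp_sT_s'AT_s-\bar T'B\bar T)$, $C_{d12}=n(\sum_sp_sT_s'AF_s-\bar T'B\bar F)=C_{d21}'$, $C_{d22}=n(\sum_sp_sF_s'AF_s-\bar F'B\bar F)$, $C_d=C_{d11}-C_{d12}C_{d22}^-C_{d21}$.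 Let $\hat T_s=T_sB_t$, $\hat F_s=F_sB_t$, $q_{s11}=\mathrm{tr}(\hat T_s'A\hat T_s)$, $q_{s12}=\mathrm{tr}(\hat T_s'A\hat F_s)$, $q_{s22}=\mathrm{tr}(\hat F_s'A\hat F_s)$, $q_{dij}=n\sum_sp_sq_{sij}$, and $q_d^*=q_{d11}-q_{d12}^2/q_{d22}$ (equivalently $q_d^*=n\min_{x\in\mathbb R}\sum_sp_s(q_{s11}+2q_{s12}x+q_{s22}x^2)$). For a permutation $\sigma$ of $\{1,\dots,t\}$ let $\sigma s=(\sigma(t_1),\dots,\sigma(t_p))$; $P$ is symmetric if $p_{\sigma s}=p_s$ for all $\sigma$ and $s$. A $t\times t$ matrix is completely symmetric if it is of the form $aI_t+bJ_t$. *)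

theory Defs
  imports Complex_Main "Jordan_Normal_Form.Matrix"
begin

(* Conventions: the probability vector a is indexed 1..p (a :: nat => real);
   matrix rows/columns and treatment labels are 0-based (treatments 0..t-1,
   periods 0..p-1). *)

definition mtrace :: "real mat \<Rightarrow> real" where
  "mtrace M = (\<Sum>i<dim_row M. M $$ (i, i))"

definition asum :: "(nat \<Rightarrow> real) \<Rightarrow> nat \<Rightarrow> nat \<Rightarrow> real" where
  "asum a j k = (\<Sum>i\<in>{j..k}. a i)"

definition alpha :: "(nat \<Rightarrow> real) \<Rightarrow> nat \<Rightarrow> nat \<Rightarrow> real" where
  "alpha a n k = (real (n+1) * a k + asum a 1 (k-1) ^ (n+1) - asum a 1 k ^ (n+1)) / real n"

definition beta :: "(nat \<Rightarrow> real) \<Rightarrow> nat \<Rightarrow> nat \<Rightarrow> nat \<Rightarrow> real" where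
  "beta a p n k = a k + asum a (k+1) p * asum a 1 k ^ n - asum a k p * asum a 1 (k-1) ^ n"

definition Bcent :: "nat \<Rightarrow> real mat" where
  "Bcent k = mat k k (\<lambda>(i,j). (if i = j then 1 else 0) - 1 / real k)"

definition Bkp :: "nat \<Rightarrow> nat \<Rightarrow> real mat" where
  "Bkp p k = mat p p (\<lambda>(i,j). if i < k \<and> j < k then (if i = j then 1 else 0) - 1 / real k else 0)"

definition Amat :: "(nat \<Rightarrow> real) \<Rightarrow> nat \<Rightarrow> nat \<Rightarrow> real mat" where
  "Amat a p n = mat p p (\<lambda>ij. \<Sum>k=1..p. alpha a n k * Bkp p k $$ ij)"

definition Bmat :: "(nat \<Rightarrow> real) \<Rightarrow> nat \<Rightarrow> nat \<Rightarrow> real mat" where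
  "Bmat a p n = mat p p (\<lambda>ij. \<Sum>k=1..p. beta a p n k * Bkp p k $$ ij)"

definition Sset :: "nat \<Rightarrow> nat \<Rightarrow> nat list set" where
  "Sset p t = {s. length s = p \<and> set s \<subseteq> {0..<t}}"

definition Tm :: "nat \<Rightarrow> nat \<Rightarrow> nat list \<Rightarrow> real mat" where
  "Tm p t s = mat p t (\<lambda>(k,i). if s ! k = i then 1 else 0)"

definition Fm :: "nat \<Rightarrow> nat \<Rightarrow> nat list \<Rightarrow> real mat" where
  "Fm p t s = mat p t (\<lambda>(k,i). if 1 \<le> k \<and> s ! (k - 1) = i then 1 else 0)"

definition design :: "nat \<Rightarrow> nat \<Rightarrow> (nat list \<Rightarrow> real) \<Rightarrow> bool" where
  "design p t P \<longleftrightarrow> (\<forall>s\<in>Sset p t. P s \<ge> 0) \<and> (\<Sum>s\<in>Sset p t. P s) = 1"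

definition symmetric_design :: "nat \<Rightarrow> nat \<Rightarrow> (nat list \<Rightarrow> real) \<Rightarrow> bool" where
  "symmetric_design p t P \<longleftrightarrow>
     (\<forall>\<sigma>. \<sigma> permutes {0..<t} \<longrightarrow> (\<forall>s\<in>Sset p t. P (map \<sigma> s) = P s))"

definition msum :: "nat \<Rightarrow> nat \<Rightarrow> (nat list \<Rightarrow> real) \<Rightarrow> (nat list \<Rightarrow> real mat) \<Rightarrow> nat \<Rightarrow> nat \<Rightarrow> real mat" where
  "msum p t P M r c = mat r c (\<lambda>ij. \<Sum>s\<in>Sset p t. P s * M s $$ ij)"

definition Tbar where "Tbar p t P = msum p t P (Tm p t) p t"
definition Fbar where "Fbar p t P = msum p t P (Fm p t) p t"

definition Cd11 :: "(nat \<Rightarrow> real) \<Rightarrow> nat \<Rightarrow> nat \<Rightarrow> nat \<Rightarrow> (nat list \<Rightarrow> real) \<Rightarrow> real mat" where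
  "Cd11 a p t n P = real n \<cdot>\<^sub>m
     (msum p t P (\<lambda>s. transpose_mat (Tm p t s) * Amat a p n * Tm p t s) t t
      - transpose_mat (Tbar p t P) * Bmat a p n * Tbar p t P)"

definition Cd12 :: "(nat \<Rightarrow> real) \<Rightarrow> nat \<Rightarrow> nat \<Rightarrow> nat \<Rightarrow> (nat list \<Rightarrow> real) \<Rightarrow> real mat" where
  "Cd12 a p t n P = real n \<cdot>\<^sub>m
     (msum p t P (\<lambda>s. transpose_mat (Tm p t s) * Amat a p n * Fm p t s) t t
      - transpose_mat (Tbar p t P) * Bmat a p n * Fbar p t P)"

definition Cd21 :: "(nat \<Rightarrow> real) \<Rightarrow> nat \<Rightarrow> nat \<Rightarrow> nat \<Rightarrow> (nat list \<Rightarrow> real) \<Rightarrow> real mat" where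
  "Cd21 a p t n P = transpose_mat (Cd12 a p t n P)"

definition Cd22 :: "(nat \<Rightarrow> real) \<Rightarrow> nat \<Rightarrow> nat \<Rightarrow> nat \<Rightarrow> (nat list \<Rightarrow> real) \<Rightarrow> real mat" where
  "Cd22 a p t n P = real n \<cdot>\<^sub>m
     (msum p t P (\<lambda>s. transpose_mat (Fm p t s) * Amat a p n * Fm p t s) t t
      - transpose_mat (Fbar p t P) * Bmat a p n * Fbar p t P)"

definition ginverse :: "real mat \<Rightarrow> real mat \<Rightarrow> bool" where
  "ginverse M G \<longleftrightarrow> G \<in> carrier_mat (dim_col M) (dim_row M) \<and> M * G * M = M"

definition Cd :: "(nat \<Rightarrow> real) \<Rightarrow> nat \<Rightarrow> nat \<Rightarrow> nat \<Rightarrow> (nat list \<Rightarrow> real) \<Rightarrow> real mat \<Rightarrow> real mat" where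
  "Cd a p t n P G = Cd11 a p t n P - Cd12 a p t n P * G * Cd21 a p t n P"

definition completely_symmetric :: "nat \<Rightarrow> real mat \<Rightarrow> bool" where
  "completely_symmetric t M \<longleftrightarrow>
     (\<exists>x y. M = x \<cdot>\<^sub>m 1\<^sub>m t + y \<cdot>\<^sub>m mat t t (\<lambda>_. 1))"

definition qs11 where
  "qs11 a p t n s = mtrace (transpose_mat (Tm p t s * Bcent t) * Amat a p n * (Tm p t s * Bcent t))"
definition qs12 where
  "qs12 a p t n s = mtrace (transpose_mat (Tm p t s * Bcent t) * Amat a p n * (Fm p t s * Bcent t))"
definition qs22 where
  "qs22 a p t n s = mtrace (transpose_mat (Fm p t s * Bcent t) * Amat a p n * (Fm p t s * Bcent t))"

definition qd11 where "qd11 a p t n P = real n * (\<Sum>s\<in>Sset p t. P s * qs11 a p t n s)"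
definition qd12 where "qd12 a p t n P = real n * (\<Sum>s\<in>Sset p t. P s * qs12 a p t n s)"
definition qd22 where "qd22 a p t n P = real n * (\<Sum>s\<in>Sset p t. P s * qs22 a p t n s)"

definition qstar :: "(nat \<Rightarrow> real) \<Rightarrow> nat \<Rightarrow> nat \<Rightarrow> nat \<Rightarrow> (nat list \<Rightarrow> real) \<Rightarrow> real" where
  "qstar a p t n P = qd11 a p t n P - (qd12 a p t n P)^2 / qd22 a p t n P"

end

theory Submission
  imports Defs "HOL-Combinatorics.Permutations"
begin


lemma finite_Sset: "finite (Sset p t)"
proof -
  have "Sset p t = {xs. set xs \<subseteq> {0..<t} \<and> length xs = p}" by (auto simp: Sset_def)
  thus ?thesis using finite_lists_length_eq[of "{0..<t}" p] by simp
qed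

lemma map_perm_Sset:
  assumes "\<sigma> permutes {0..<t}" "s \<in> Sset p t"
  shows "map \<sigma> s \<in> Sset p t"
  using assms permutes_in_image[OF assms(1)] by (auto simp: Sset_def)

lemma sum_Sset_perm:
  assumes "\<sigma> permutes {0..<t}"
  shows "(\<Sum>s\<in>Sset p t. h (map \<sigma> s)) = (\<Sum>s\<in>Sset p t. h s)"
proof (rule sum.reindex_bij_witness[where i="map (Hilbert_Choice.inv \<sigma>)" and j="map \<sigma>"])
  fix s assume s: "s \<in> Sset p t"
  show "map (Hilbert_Choice.inv \<sigma>) (map \<sigma> s) = s" using permutes_inverses[OF assms] by (simp add: map_idI)
  show "map \<sigma> s \<in> Sset p t" by (rule map_perm_Sset[OF assms s])
  show "h (map \<sigma> s) = h (map \<sigma> s)" by simp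
next
  fix s assume s: "s \<in> Sset p t"
  show "map \<sigma> (map (Hilbert_Choice.inv \<sigma>) s) = s" using permutes_inverses[OF assms] by (simp add: map_idI)
  show "map (Hilbert_Choice.inv \<sigma>) s \<in> Sset p t" by (rule map_perm_Sset[OF permutes_inv[OF assms] s])
qed

lemma sum_Sset_sym:
  assumes "symmetric_design p t P" "\<sigma> permutes {0..<t}"
  shows "(\<Sum>s\<in>Sset p t. P s * h (map \<sigma> s)) = (\<Sum>s\<in>Sset p t. P s * h s)"
proof -
  have "(\<Sum>s\<in>Sset p t. P s * h (map \<sigma> s)) = (\<Sum>s\<in>Sset p t. P (map \<sigma> s) * h (map \<sigma> s))"
    using assms unfolding symmetric_design_def by (intro sum.cong) auto
  also have "\<dots> = (\<Sum>s\<in>Sset p t. P s * h s)" by (rule sum_Sset_perm[OF assms(2)])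
  finally show ?thesis .
qed

lemma inv_cs:
  fixes g :: "nat \<Rightarrow> nat \<Rightarrow> real"
  assumes inv: "\<And>\<sigma> i j. \<sigma> permutes {0..<t} \<Longrightarrow> i < t \<Longrightarrow> j < t \<Longrightarrow> g (\<sigma> i) (\<sigma> j) = g i j"
    and t: "t \<ge> 2" and i: "i < t" and j: "j < t"
  shows "g i j = (if i = j then g 0 0 else g 0 1)"
proof (cases "i = j")
  case True
  let ?\<sigma> = "Transposition.transpose 0 i"
  have "?\<sigma> permutes {0..<t}" using i t by (intro permutes_swap_id) auto
  from inv[OF this, of 0 0] t True show ?thesis by simp
next
  case False
  let ?\<rho> = "Transposition.transpose 0 i"
  let ?\<tau> = "Transposition.transpose (?\<rho> 1) j"
  have r: "?\<rho> permutes {0..<t}" using i t by (intro permutes_swap_id) auto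
  have "?\<rho> 1 < t" using permutes_in_image[OF r, of 1] t by simp
  hence "?\<tau> permutes {0..<t}" using j by (intro permutes_swap_id) auto
  hence s: "(?\<tau> \<circ> ?\<rho>) permutes {0..<t}" by (rule permutes_compose[OF r])
  have "(?\<tau> \<circ> ?\<rho>) 0 = i" "(?\<tau> \<circ> ?\<rho>) 1 = j" using False
    by (auto simp: transpose_def)
  with inv[OF s, of 0 1] t False show ?thesis by simp
qed

definition trip :: "nat \<Rightarrow> real mat \<Rightarrow> real mat \<Rightarrow> real mat \<Rightarrow> nat \<Rightarrow> nat \<Rightarrow> real" where
  "trip p X A Y i j = (\<Sum>k<p. \<Sum>l<p. X $$ (k,i) * A $$ (k,l) * Y $$ (l,j))"

lemma tAB_idx:
  assumes "X \<in> carrier_mat p t" "A \<in> carrier_mat p p" "Y \<in> carrier_mat p t" "i < t" "j < t"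
  shows "(transpose_mat X * A * Y) $$ (i,j) = trip p X A Y i j"
proof -
  have "(transpose_mat X * A * Y) $$ (i,j) = (\<Sum>k<p. X $$ (k,i) * (\<Sum>l<p. A $$ (k,l) * Y $$ (l,j)))"
    using assms by (simp add: scalar_prod_def lessThan_atLeast0)
  thus ?thesis unfolding trip_def sum_distrib_left by (simp add: mult.assoc)
qed

lemma mtrace_carrier: "M \<in> carrier_mat t t \<Longrightarrow> mtrace M = (\<Sum>i<t. M $$ (i,i))"
  by (simp add: mtrace_def)

lemma Tm_carrier[simp]: "Tm p t s \<in> carrier_mat p t" by (simp add: Tm_def)
lemma Fm_carrier[simp]: "Fm p t s \<in> carrier_mat p t" by (simp add: Fm_def)
lemma Tm_idx: "k < p \<Longrightarrow> i < t \<Longrightarrow> Tm p t s $$ (k,i) = (if s ! k = i then 1 else 0)"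
  by (simp add: Tm_def)
lemma Fm_idx: "k < p \<Longrightarrow> i < t \<Longrightarrow> Fm p t s $$ (k,i) = (if 1 \<le> k \<and> s ! (k-1) = i then 1 else 0)"
  by (simp add: Fm_def)
lemma msum_carrier[simp]: "msum p t P M r c \<in> carrier_mat r c" by (simp add: msum_def)
lemma msum_dims[simp]: "dim_row (msum p t P M r c) = r" "dim_col (msum p t P M r c) = c"
  by (simp_all add: msum_def)
lemma msum_idx: "i < r \<Longrightarrow> j < c \<Longrightarrow> msum p t P M r c $$ (i,j) = (\<Sum>s\<in>Sset p t. P s * M s $$ (i,j))"
  by (simp add: msum_def)

definition CC where
  "CC p t n P X Y A B = real n \<cdot>\<^sub>m
     (msum p t P (\<lambda>s. transpose_mat (X s) * A * Y s) t t
      - transpose_mat (msum p t P X p t) * B * msum p t P Y p t)"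

lemma CC_dims[simp]: "dim_row (CC p t n P X Y A B) = t" "dim_col (CC p t n P X Y A B) = t"
  by (simp_all add: CC_def)
lemma CC_carrier[simp]: "CC p t n P X Y A B \<in> carrier_mat t t"
  by (rule carrier_matI) simp_all

lemma CC_idx:
  assumes X: "\<And>s. X s \<in> carrier_mat p t" and Y: "\<And>s. Y s \<in> carrier_mat p t"
    and A: "A \<in> carrier_mat p p" and B: "B \<in> carrier_mat p p" and ij: "i < t" "j < t"
  shows "CC p t n P X Y A B $$ (i,j) = real n * ((\<Sum>s\<in>Sset p t. P s * trip p (X s) A (Y s) i j)
        - trip p (msum p t P X p t) B (msum p t P Y p t) i j)"
proof -
  have "(transpose_mat (msum p t P X p t) * B * msum p t P Y p t) $$ (i,j) = trip p (msum p t P X p t) B (msum p t P Y p t) i j"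
    by (rule tAB_idx[OF msum_carrier B msum_carrier ij])
  moreover have "(msum p t P (\<lambda>s. transpose_mat (X s) * A * Y s) t t) $$ (i,j) = (\<Sum>s\<in>Sset p t. P s * trip p (X s) A (Y s) i j)"
    using tAB_idx[OF X A Y ij] ij by (simp add: msum_idx)
  ultimately show ?thesis using ij B by (simp add: CC_def)
qed

lemma Cd11_CC: "Cd11 a p t n P = CC p t n P (Tm p t) (Tm p t) (Amat a p n) (Bmat a p n)"
  by (simp add: Cd11_def CC_def Tbar_def)
lemma Cd12_CC: "Cd12 a p t n P = CC p t n P (Tm p t) (Fm p t) (Amat a p n) (Bmat a p n)"
  by (simp add: Cd12_def CC_def Tbar_def Fbar_def)
lemma Cd22_CC: "Cd22 a p t n P = CC p t n P (Fm p t) (Fm p t) (Amat a p n) (Bmat a p n)"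
  by (simp add: Cd22_def CC_def Fbar_def)



definition perm_inv :: "nat \<Rightarrow> nat \<Rightarrow> (nat list \<Rightarrow> real mat) \<Rightarrow> bool" where
  "perm_inv p t X \<longleftrightarrow> (\<forall>\<sigma> s k i. \<sigma> permutes {0..<t} \<longrightarrow> s \<in> Sset p t \<longrightarrow> k < p \<longrightarrow> i < t \<longrightarrow>
      X (map \<sigma> s) $$ (k, \<sigma> i) = X s $$ (k, i))"

lemma perm_lt: "\<sigma> permutes {0..<t} \<Longrightarrow> (i::nat) < t \<Longrightarrow> \<sigma> i < t"
  using permutes_in_image[of \<sigma> "{0..<t}" i] by auto

lemma perm_inv_Tm: "perm_inv p t (Tm p t)"
  unfolding perm_inv_def
proof (intro allI impI)
  fix \<sigma> s k i assume \<sigma>: "\<sigma> permutes {0..<t}" and s: "s \<in> Sset p t" and k: "k < p" and i: "i < t"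
  have "length s = p" using s by (simp add: Sset_def)
  moreover have "(\<sigma> (s ! k) = \<sigma> i) = (s ! k = i)" using permutes_inj[OF \<sigma>] by (auto dest: injD)
  ultimately show "Tm p t (map \<sigma> s) $$ (k, \<sigma> i) = Tm p t s $$ (k, i)"
    using k i perm_lt[OF \<sigma> i] by (simp add: Tm_idx)
qed

lemma perm_inv_Fm: "perm_inv p t (Fm p t)"
  unfolding perm_inv_def
proof (intro allI impI)
  fix \<sigma> s k i assume \<sigma>: "\<sigma> permutes {0..<t}" and s: "s \<in> Sset p t" and k: "k < p" and i: "i < t"
  have "length s = p" using s by (simp add: Sset_def)
  moreover have "(\<sigma> (s ! (k-1)) = \<sigma> i) = (s ! (k-1) = i)" using permutes_inj[OF \<sigma>] by (auto dest: injD)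
  ultimately show "Fm p t (map \<sigma> s) $$ (k, \<sigma> i) = Fm p t s $$ (k, i)"
    using k i perm_lt[OF \<sigma> i] by (simp add: Fm_idx)
qed

lemma msum_perm:
  assumes sym: "symmetric_design p t P" and X: "perm_inv p t X" and \<sigma>: "\<sigma> permutes {0..<t}"
    and k: "k < p" and i: "i < t"
  shows "msum p t P X p t $$ (k, \<sigma> i) = msum p t P X p t $$ (k, i)"
proof -
  have "msum p t P X p t $$ (k, \<sigma> i) = (\<Sum>s\<in>Sset p t. P s * X s $$ (k, \<sigma> i))"
    using k perm_lt[OF \<sigma> i] by (simp add: msum_idx)
  also have "\<dots> = (\<Sum>s\<in>Sset p t. P s * X (map \<sigma> s) $$ (k, \<sigma> i))"
    by (rule sum_Sset_sym[OF sym \<sigma>, symmetric])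
  also have "\<dots> = (\<Sum>s\<in>Sset p t. P s * X s $$ (k, i))"
    using X \<sigma> k i unfolding perm_inv_def by (intro sum.cong) auto
  also have "\<dots> = msum p t P X p t $$ (k, i)" using k i by (simp add: msum_idx)
  finally show ?thesis .
qed

lemma CC_perm:
  assumes sym: "symmetric_design p t P" and X: "perm_inv p t X" and Y: "perm_inv p t Y"
    and Xc: "\<And>s. X s \<in> carrier_mat p t" and Yc: "\<And>s. Y s \<in> carrier_mat p t"
    and A: "A \<in> carrier_mat p p" and B: "B \<in> carrier_mat p p"
    and \<sigma>: "\<sigma> permutes {0..<t}" and i: "i < t" and j: "j < t"
  shows "CC p t n P X Y A B $$ (\<sigma> i, \<sigma> j) = CC p t n P X Y A B $$ (i, j)"
proof -
  have 1: "(\<Sum>s\<in>Sset p t. P s * trip p (X s) A (Y s) (\<sigma> i) (\<sigma> j)) = (\<Sum>s\<in>Sset p t. P s * trip p (X s) A (Y s) i j)"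
  proof -
    have "(\<Sum>s\<in>Sset p t. P s * trip p (X s) A (Y s) (\<sigma> i) (\<sigma> j))
        = (\<Sum>s\<in>Sset p t. P s * trip p (X (map \<sigma> s)) A (Y (map \<sigma> s)) (\<sigma> i) (\<sigma> j))"
      by (rule sum_Sset_sym[OF sym \<sigma>, symmetric])
    also have "\<dots> = (\<Sum>s\<in>Sset p t. P s * trip p (X s) A (Y s) i j)"
      using X Y \<sigma> i j unfolding perm_inv_def trip_def by (intro sum.cong) auto
    finally show ?thesis .
  qed
  have 2: "trip p (msum p t P X p t) B (msum p t P Y p t) (\<sigma> i) (\<sigma> j) = trip p (msum p t P X p t) B (msum p t P Y p t) i j"
    unfolding trip_def using msum_perm[OF sym X \<sigma> _ i] msum_perm[OF sym Y \<sigma> _ j] by simp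
  show ?thesis
    using CC_idx[OF Xc Yc A B perm_lt[OF \<sigma> i] perm_lt[OF \<sigma> j]] CC_idx[OF Xc Yc A B i j] 1 2 by simp
qed

lemma CC_cs_entries:
  assumes sym: "symmetric_design p t P" and X: "perm_inv p t X" and Y: "perm_inv p t Y"
    and Xc: "\<And>s. X s \<in> carrier_mat p t" and Yc: "\<And>s. Y s \<in> carrier_mat p t"
    and A: "A \<in> carrier_mat p p" and B: "B \<in> carrier_mat p p" and t: "t \<ge> 2"
    and i: "i < t" and j: "j < t"
  shows "CC p t n P X Y A B $$ (i, j) = (if i = j then CC p t n P X Y A B $$ (0,0) else CC p t n P X Y A B $$ (0,1))"
  by (rule inv_cs[where g="\<lambda>i j. CC p t n P X Y A B $$ (i, j)", OF CC_perm[OF sym X Y Xc Yc A B] t i j])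

lemma cs_form:
  fixes M :: "real mat"
  assumes M: "M \<in> carrier_mat t t" and e: "\<And>i j. i < t \<Longrightarrow> j < t \<Longrightarrow> M $$ (i,j) = (if i = j then d else c)"
  shows "M = (d - c) \<cdot>\<^sub>m 1\<^sub>m t + c \<cdot>\<^sub>m mat t t (\<lambda>_. 1)"
  by (rule eq_matI) (use M e in auto)



lemma sum_swap3: "(\<Sum>i\<in>I. \<Sum>k\<in>K. \<Sum>l\<in>L. f i k l) = (\<Sum>k\<in>K. \<Sum>l\<in>L. \<Sum>i\<in>I. f i k l)"
proof -
  have "(\<Sum>i\<in>I. \<Sum>k\<in>K. \<Sum>l\<in>L. f i k l) = (\<Sum>k\<in>K. \<Sum>i\<in>I. \<Sum>l\<in>L. f i k l)"
    by (rule sum.swap)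
  also have "\<dots> = (\<Sum>k\<in>K. \<Sum>l\<in>L. \<Sum>i\<in>I. f i k l)"
    by (rule sum.cong[OF refl], rule sum.swap)
  finally show ?thesis .
qed

lemma sum_Sset_swap: "(\<Sum>i\<in>I. \<Sum>s\<in>S. (P s :: real) * f s i) = (\<Sum>s\<in>S. P s * (\<Sum>i\<in>I. f s i))"
  by (simp add: sum_distrib_left) (rule sum.swap)

lemma trip_colsum:
  assumes X: "\<And>k. k < p \<Longrightarrow> (\<Sum>i<t. X $$ (k,i)) = 1" and A: "\<And>l. l < p \<Longrightarrow> (\<Sum>k<p. A $$ (k,l)) = (0::real)"
  shows "(\<Sum>i<t. trip p X A Y i j) = 0"
proof -
  have "(\<Sum>i<t. trip p X A Y i j) = (\<Sum>k<p. \<Sum>l<p. \<Sum>i<t. X $$ (k,i) * A $$ (k,l) * Y $$ (l,j))"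
    unfolding trip_def by (rule sum_swap3)
  also have "\<dots> = (\<Sum>k<p. \<Sum>l<p. A $$ (k,l) * Y $$ (l,j))"
    using X by (simp add: sum_distrib_right[symmetric] mult.assoc)
  also have "\<dots> = (\<Sum>l<p. (\<Sum>k<p. A $$ (k,l)) * Y $$ (l,j))"
    by (subst sum.swap) (simp add: sum_distrib_right)
  also have "\<dots> = 0" using A by simp
  finally show ?thesis .
qed

lemma trip_rowsum:
  assumes Y: "\<And>l. l < p \<Longrightarrow> (\<Sum>j<t. Y $$ (l,j)) = 1" and A: "\<And>k. k < p \<Longrightarrow> (\<Sum>l<p. A $$ (k,l)) = (0::real)"
  shows "(\<Sum>j<t. trip p X A Y i j) = 0"
proof -
  have "(\<Sum>j<t. trip p X A Y i j) = (\<Sum>k<p. \<Sum>l<p. \<Sum>j<t. X $$ (k,i) * A $$ (k,l) * Y $$ (l,j))"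
    unfolding trip_def by (rule sum_swap3)
  also have "\<dots> = (\<Sum>k<p. \<Sum>l<p. X $$ (k,i) * A $$ (k,l))"
    using Y by (simp add: sum_distrib_left[symmetric])
  also have "\<dots> = (\<Sum>k<p. X $$ (k,i) * (\<Sum>l<p. A $$ (k,l)))"
    by (simp add: sum_distrib_left)
  also have "\<dots> = 0" using A by simp
  finally show ?thesis .
qed

lemma msum_rowsum:
  assumes d: "design p t P" and X: "\<And>s. s \<in> Sset p t \<Longrightarrow> (\<Sum>i<t. X s $$ (k,i)) = 1" and k: "k < p"
  shows "(\<Sum>i<t. msum p t P X p t $$ (k,i)) = 1"
proof -
  have "(\<Sum>i<t. msum p t P X p t $$ (k,i)) = (\<Sum>i<t. \<Sum>s\<in>Sset p t. P s * X s $$ (k,i))"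
    using k by (simp add: msum_idx)
  also have "\<dots> = (\<Sum>s\<in>Sset p t. P s * (\<Sum>i<t. X s $$ (k,i)))" by (rule sum_Sset_swap)
  also have "\<dots> = (\<Sum>s\<in>Sset p t. P s)" using X by simp
  also have "\<dots> = 1" using d by (simp add: design_def)
  finally show ?thesis .
qed

lemma Tm_rowsum: "s \<in> Sset p t \<Longrightarrow> k < p \<Longrightarrow> (\<Sum>i<t. Tm p t s $$ (k,i)) = 1"
proof -
  assume s: "s \<in> Sset p t" and k: "k < p"
  hence lt: "s ! k < t" by (auto simp: Sset_def dest!: nth_mem)
  have "(\<Sum>i<t. Tm p t s $$ (k,i)) = (\<Sum>i<t. if s ! k = i then 1 else 0)"
    using k by (intro sum.cong) (auto simp: Tm_idx)
  also have "\<dots> = 1" using lt by simp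
  finally show ?thesis .
qed

lemma CC_colsum:
  assumes d: "design p t P"
    and Xc: "\<And>s. X s \<in> carrier_mat p t" and Yc: "\<And>s. Y s \<in> carrier_mat p t"
    and A: "A \<in> carrier_mat p p" and B: "B \<in> carrier_mat p p"
    and X1: "\<And>s k. s \<in> Sset p t \<Longrightarrow> k < p \<Longrightarrow> (\<Sum>i<t. X s $$ (k,i)) = 1"
    and A0: "\<And>l. l < p \<Longrightarrow> (\<Sum>k<p. A $$ (k,l)) = 0" and B0: "\<And>l. l < p \<Longrightarrow> (\<Sum>k<p. B $$ (k,l)) = 0"
    and j: "j < t"
  shows "(\<Sum>i<t. CC p t n P X Y A B $$ (i,j)) = 0"
proof -
  have "(\<Sum>i<t. CC p t n P X Y A B $$ (i,j)) = (\<Sum>i<t. real n * ((\<Sum>s\<in>Sset p t. P s * trip p (X s) A (Y s) i j)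
        - trip p (msum p t P X p t) B (msum p t P Y p t) i j))"
    using CC_idx[OF Xc Yc A B _ j] by simp
  also have "\<dots> = real n * ((\<Sum>s\<in>Sset p t. P s * (\<Sum>i<t. trip p (X s) A (Y s) i j))
        - (\<Sum>i<t. trip p (msum p t P X p t) B (msum p t P Y p t) i j))"
    by (simp add: sum_distrib_left[symmetric] sum_subtractf sum_Sset_swap)
  also have "\<dots> = 0"
    using trip_colsum[OF X1 A0] trip_colsum[OF msum_rowsum[OF d X1] B0] by simp
  finally show ?thesis .
qed

lemma CC_rowsum:
  assumes d: "design p t P"
    and Xc: "\<And>s. X s \<in> carrier_mat p t" and Yc: "\<And>s. Y s \<in> carrier_mat p t"
    and A: "A \<in> carrier_mat p p" and B: "B \<in> carrier_mat p p"
    and Y1: "\<And>s k. s \<in> Sset p t \<Longrightarrow> k < p \<Longrightarrow> (\<Sum>i<t. Y s $$ (k,i)) = 1"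
    and A0: "\<And>k. k < p \<Longrightarrow> (\<Sum>l<p. A $$ (k,l)) = 0" and B0: "\<And>k. k < p \<Longrightarrow> (\<Sum>l<p. B $$ (k,l)) = 0"
    and i: "i < t"
  shows "(\<Sum>j<t. CC p t n P X Y A B $$ (i,j)) = 0"
proof -
  have "(\<Sum>j<t. CC p t n P X Y A B $$ (i,j)) = (\<Sum>j<t. real n * ((\<Sum>s\<in>Sset p t. P s * trip p (X s) A (Y s) i j)
        - trip p (msum p t P X p t) B (msum p t P Y p t) i j))"
    using CC_idx[OF Xc Yc A B i] by simp
  also have "\<dots> = real n * ((\<Sum>s\<in>Sset p t. P s * (\<Sum>j<t. trip p (X s) A (Y s) i j))
        - (\<Sum>j<t. trip p (msum p t P X p t) B (msum p t P Y p t) i j))"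
    by (simp add: sum_distrib_left[symmetric] sum_subtractf sum_Sset_swap)
  also have "\<dots> = 0"
    using trip_rowsum[OF Y1 A0] trip_rowsum[OF msum_rowsum[OF d Y1] B0] by simp
  finally show ?thesis .
qed



definition Phi :: "nat \<Rightarrow> (nat \<Rightarrow> nat \<Rightarrow> real) \<Rightarrow> real" where
  "Phi t m = (\<Sum>i<t. m i i) - (\<Sum>i<t. \<Sum>j<t. m i j) / real t"

lemma mult_if_delta_right: "(x::real) * (if j = i then 1 else 0) = (if j = i then x else 0)" by simp

lemma XB_idx:
  assumes X: "X \<in> carrier_mat p t" and k: "k < p" and i: "i < t"
  shows "(X * Bcent t) $$ (k,i) = X $$ (k,i) - (\<Sum>j<t. X $$ (k,j)) / real t"
proof -
  have "(X * Bcent t) $$ (k,i) = (\<Sum>j<t. X $$ (k,j) * ((if j = i then 1 else 0) - 1 / real t))"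
    using X k i by (simp add: Bcent_def scalar_prod_def lessThan_atLeast0)
  also have "\<dots> = (\<Sum>j<t. (if j = i then X $$ (k,j) else 0)) - (\<Sum>j<t. X $$ (k,j)) / real t"
    by (simp add: right_diff_distrib sum_subtractf sum_divide_distrib mult_if_delta_right)
  also have "\<dots> = X $$ (k,i) - (\<Sum>j<t. X $$ (k,j)) / real t" using i by simp
  finally show ?thesis .
qed

lemma Bcent_carrier[simp]: "Bcent t \<in> carrier_mat t t" by (simp add: Bcent_def)
lemma XB_carrier: "X \<in> carrier_mat p t \<Longrightarrow> X * Bcent t \<in> carrier_mat p t"
  by (rule mult_carrier_mat[OF _ Bcent_carrier])

lemma cov_lemma:
  fixes x y :: "nat \<Rightarrow> real"
  assumes t: "t > 0"
  shows "(\<Sum>i<t. (x i - (\<Sum>j<t. x j) / real t) * (y i - (\<Sum>j<t. y j) / real t))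
       = (\<Sum>i<t. x i * y i) - (\<Sum>j<t. x j) * (\<Sum>j<t. y j) / real t"
proof -
  define a where "a = (\<Sum>j<t. x j) / real t"
  define b where "b = (\<Sum>j<t. y j) / real t"
  have sx: "(\<Sum>j<t. x j) = a * t" and sy: "(\<Sum>j<t. y j) = b * t" using t by (simp_all add: a_def b_def)
  have "(\<Sum>i<t. (x i - a) * (y i - b)) = (\<Sum>i<t. x i * y i - (b * x i + a * y i) + a * b)"
    by (rule sum.cong) (auto simp: algebra_simps)
  also have "\<dots> = (\<Sum>i<t. x i * y i) - (b * (\<Sum>i<t. x i) + a * (\<Sum>i<t. y i)) + a * b * t"
    by (simp add: sum.distrib sum_subtractf sum_distrib_left)
  also have "\<dots> = (\<Sum>i<t. x i * y i) - (a * t) * (b * t) / real t"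
    using t by (simp add: sx sy field_simps)
  finally show ?thesis by (simp add: a_def[symmetric] b_def[symmetric] sx sy)
qed

lemma Phi_trip:
  assumes X: "X \<in> carrier_mat p t" and Y: "Y \<in> carrier_mat p t" and t: "t > 0"
  shows "Phi t (trip p X A Y) = (\<Sum>i<t. trip p (X * Bcent t) A (Y * Bcent t) i i)"
proof -
  let ?rX = "\<lambda>k. \<Sum>j<t. X $$ (k,j)" and ?rY = "\<lambda>l. \<Sum>j<t. Y $$ (l,j)"
  have "(\<Sum>i<t. trip p (X * Bcent t) A (Y * Bcent t) i i)
      = (\<Sum>i<t. \<Sum>k<p. \<Sum>l<p. (X $$ (k,i) - ?rX k / t) * A $$ (k,l) * (Y $$ (l,i) - ?rY l / t))"
    unfolding trip_def using XB_idx[OF X] XB_idx[OF Y] by simp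
  also have "\<dots> = (\<Sum>k<p. \<Sum>l<p. \<Sum>i<t. A $$ (k,l) * ((X $$ (k,i) - ?rX k / t) * (Y $$ (l,i) - ?rY l / t)))"
    by (subst sum_swap3) (simp add: ac_simps)
  also have "\<dots> = (\<Sum>k<p. \<Sum>l<p. A $$ (k,l) * ((\<Sum>i<t. X $$ (k,i) * Y $$ (l,i)) - ?rX k * ?rY l / t))"
    by (simp add: sum_distrib_left[symmetric] cov_lemma[OF t])
  finally have R: "(\<Sum>i<t. trip p (X * Bcent t) A (Y * Bcent t) i i) = \<dots>" .
  have L1: "(\<Sum>i<t. trip p X A Y i i) = (\<Sum>k<p. \<Sum>l<p. A $$ (k,l) * (\<Sum>i<t. X $$ (k,i) * Y $$ (l,i)))"
    unfolding trip_def by (subst sum_swap3) (simp add: sum_distrib_left ac_simps)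
  have L2: "(\<Sum>i<t. \<Sum>j<t. trip p X A Y i j) = (\<Sum>k<p. \<Sum>l<p. A $$ (k,l) * (?rX k * ?rY l))"
  proof -
    have "(\<Sum>i<t. \<Sum>j<t. trip p X A Y i j) = (\<Sum>i<t. \<Sum>k<p. \<Sum>l<p. \<Sum>j<t. X $$ (k,i) * A $$ (k,l) * Y $$ (l,j))"
      unfolding trip_def by (rule sum.cong[OF refl], rule sum_swap3)
    also have "\<dots> = (\<Sum>k<p. \<Sum>l<p. \<Sum>i<t. \<Sum>j<t. X $$ (k,i) * A $$ (k,l) * Y $$ (l,j))"
      by (rule sum_swap3)
    also have "\<dots> = (\<Sum>k<p. \<Sum>l<p. A $$ (k,l) * (?rX k * ?rY l))"
    proof (intro sum.cong refl)
      fix k l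
      show "(\<Sum>i<t. \<Sum>j<t. X $$ (k,i) * A $$ (k,l) * Y $$ (l,j)) = A $$ (k,l) * (?rX k * ?rY l)"
        unfolding sum_product by (simp add: sum_distrib_left ac_simps)
    qed
    finally show ?thesis .
  qed
  show ?thesis unfolding Phi_def L1 L2 R
    by (simp add: sum_divide_distrib sum_subtractf right_diff_distrib)
qed

lemma L_a: "(\<Sum>i\<in>I. (c::real) * (a i - b i)) = c * ((\<Sum>i\<in>I. a i) - (\<Sum>i\<in>I. b i))"
  by (simp add: sum_distrib_left sum_subtractf right_diff_distrib)

lemma Phi_lin:
  "Phi t (\<lambda>i j. c * ((\<Sum>s\<in>S. P s * f s i j) - g i j)) = c * ((\<Sum>s\<in>S. P s * Phi t (f s)) - Phi t g)"
proof -
  have 1: "(\<Sum>i<t. c * ((\<Sum>s\<in>S. P s * f s i i) - g i i)) = c * ((\<Sum>s\<in>S. P s * (\<Sum>i<t. f s i i)) - (\<Sum>i<t. g i i))"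
    by (simp only: L_a sum_Sset_swap)
  have 2: "(\<Sum>i<t. \<Sum>j<t. c * ((\<Sum>s\<in>S. P s * f s i j) - g i j)) = c * ((\<Sum>s\<in>S. P s * (\<Sum>i<t. \<Sum>j<t. f s i j)) - (\<Sum>i<t. \<Sum>j<t. g i j))"
    by (simp only: L_a sum_Sset_swap)
  have 3: "(\<Sum>s\<in>S. P s * Phi t (f s)) = (\<Sum>s\<in>S. P s * (\<Sum>i<t. f s i i)) - (\<Sum>s\<in>S. P s * (\<Sum>i<t. \<Sum>j<t. f s i j)) / real t"
    unfolding Phi_def by (simp add: right_diff_distrib sum_subtractf sum_divide_distrib[symmetric])
  show ?thesis unfolding 3 unfolding Phi_def 1 2 by (simp add: algebra_simps diff_divide_distrib)
qed

lemma Phi_const_rows: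
  assumes X: "X \<in> carrier_mat p t" and Y: "Y \<in> carrier_mat p t" and t: "t > 0"
    and Xc: "\<And>k i. k < p \<Longrightarrow> i < t \<Longrightarrow> X $$ (k,i) = X $$ (k,0)"
  shows "Phi t (trip p X A Y) = 0"
proof -
  have "(X * Bcent t) $$ (k,i) = 0" if "k < p" "i < t" for k i
  proof -
    have "(\<Sum>j<t. X $$ (k,j)) = (\<Sum>j<t. X $$ (k,0))" by (rule sum.cong[OF refl], rule Xc[OF that(1)], simp)
    hence "(\<Sum>j<t. X $$ (k,j)) = t * X $$ (k,0)" by simp
    thus ?thesis using XB_idx[OF X that] Xc[OF that] t by simp
  qed
  thus ?thesis unfolding Phi_trip[OF X Y t] trip_def by simp
qed

lemma sum_cs_row: "i < t \<Longrightarrow> (\<Sum>j<t. if i = j then d else c) = d + (real t - 1) * (c::real)"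
proof -
  assume i: "i < t"
  have "(\<Sum>j<t. if i = j then d else c) = (\<Sum>j<t. c + (if i = j then d - c else 0))"
    by (rule sum.cong) auto
  also have "\<dots> = t * c + (d - c)" using i by (simp add: sum.distrib)
  finally show ?thesis by (simp add: algebra_simps)
qed

lemma Phi_cs: "t > 0 \<Longrightarrow> Phi t (\<lambda>i j. if i = j then d else c) = (real t - 1) * (d - c)"
  unfolding Phi_def by (simp add: sum_cs_row field_simps)



definition Wmat :: "nat \<Rightarrow> (nat \<Rightarrow> real) \<Rightarrow> real mat" where
  "Wmat p c = mat p p (\<lambda>ij. \<Sum>m=1..p. c m * Bkp p m $$ ij)"

lemma Amat_W: "Amat a p n = Wmat p (alpha a n)" by (simp add: Amat_def Wmat_def)
lemma Bmat_W: "Bmat a p n = Wmat p (beta a p n)" by (simp add: Bmat_def Wmat_def)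

lemma Wmat_carrier[simp]: "Wmat p c \<in> carrier_mat p p" by (simp add: Wmat_def)

lemma Bkp_idx: "k < p \<Longrightarrow> l < p \<Longrightarrow> Bkp p m $$ (k,l) = (if k < m \<and> l < m then (if k = l then 1 else 0) - 1 / real m else 0)"
  by (simp add: Bkp_def)

lemma Wmat_idx: "k < p \<Longrightarrow> l < p \<Longrightarrow> Wmat p c $$ (k,l) = (\<Sum>m=1..p. c m * Bkp p m $$ (k,l))"
  by (simp add: Wmat_def)

lemma sum_restrict_lt: "(m::nat) \<le> p \<Longrightarrow> (\<Sum>l<p. if l < m then f l else 0) = (\<Sum>l<m. f l)"
proof -
  assume mp: "m \<le> p"
  have "(\<Sum>l<p. if l < m then f l else 0) = (\<Sum>l\<in>{l\<in>{..<p}. l < m}. f l)"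
    by (rule sum.inter_filter[symmetric]) simp
  also have "{l\<in>{..<p}. l < m} = {..<m}" using mp by auto
  finally show ?thesis by simp
qed

lemma Bkp_rowsum:
  assumes m: "1 \<le> m" "m \<le> p" and k: "k < p"
  shows "(\<Sum>l<p. Bkp p m $$ (k,l)) = 0"
proof (cases "k < m")
  case True
  have "(\<Sum>l<p. Bkp p m $$ (k,l)) = (\<Sum>l<p. if l < m then (if k = l then 1 else 0) - 1 / real m else 0)"
    using k True by (intro sum.cong) (auto simp: Bkp_idx)
  also have "\<dots> = (\<Sum>l<m. (if k = l then 1 else 0) - 1 / real m)" by (rule sum_restrict_lt[OF m(2)])
  also have "\<dots> = 1 - real m * (1 / real m)" using True by (simp add: sum_subtractf)
  also have "\<dots> = 0" using m by simp
  finally show ?thesis .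
next
  case False
  thus ?thesis using k by (simp add: Bkp_idx)
qed

lemma Bkp_sym: "k < p \<Longrightarrow> l < p \<Longrightarrow> Bkp p m $$ (k,l) = Bkp p m $$ (l,k)"
  by (auto simp: Bkp_idx)

lemma Wmat_sym: "k < p \<Longrightarrow> l < p \<Longrightarrow> Wmat p c $$ (k,l) = Wmat p c $$ (l,k)"
  by (simp add: Wmat_idx Bkp_sym)

lemma Wmat_rowsum: "k < p \<Longrightarrow> (\<Sum>l<p. Wmat p c $$ (k,l)) = 0"
proof -
  assume k: "k < p"
  have "(\<Sum>l<p. Wmat p c $$ (k,l)) = (\<Sum>l<p. \<Sum>m=1..p. c m * Bkp p m $$ (k,l))"
    using k by (intro sum.cong) (auto simp: Wmat_idx)
  also have "\<dots> = (\<Sum>m=1..p. c m * (\<Sum>l<p. Bkp p m $$ (k,l)))"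
    by (subst sum.swap) (simp add: sum_distrib_left)
  also have "\<dots> = 0" using Bkp_rowsum k by simp
  finally show ?thesis .
qed

lemma Wmat_colsum: "l < p \<Longrightarrow> (\<Sum>k<p. Wmat p c $$ (k,l)) = 0"
proof -
  assume l: "l < p"
  have "(\<Sum>k<p. Wmat p c $$ (k,l)) = (\<Sum>k<p. Wmat p c $$ (l,k))"
    using l by (intro sum.cong) (auto simp: Wmat_sym)
  thus ?thesis using Wmat_rowsum[OF l] by simp
qed

lemma Bkp_psd:
  assumes m: "1 \<le> m" "m \<le> p"
  shows "(\<Sum>k<p. \<Sum>l<p. v k * Bkp p m $$ (k,l) * v l) \<ge> 0"
proof -
  have "(\<Sum>k<p. \<Sum>l<p. v k * Bkp p m $$ (k,l) * v l)
      = (\<Sum>k<p. if k < m then (\<Sum>l<m. v k * ((if k = l then 1 else 0) - 1 / real m) * v l) else 0)"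
  proof (rule sum.cong[OF refl])
    fix k assume k: "k \<in> {..<p}"
    have "(\<Sum>l<p. v k * Bkp p m $$ (k,l) * v l) = (\<Sum>l<p. if l < m then (if k < m then v k * ((if k = l then 1 else 0) - 1 / real m) * v l else 0) else 0)"
      using k by (intro sum.cong) (auto simp: Bkp_idx)
    also have "\<dots> = (\<Sum>l<m. if k < m then v k * ((if k = l then 1 else 0) - 1 / real m) * v l else 0)"
      by (rule sum_restrict_lt[OF m(2)])
    finally show "(\<Sum>l<p. v k * Bkp p m $$ (k,l) * v l) = (if k < m then (\<Sum>l<m. v k * ((if k = l then 1 else 0) - 1 / real m) * v l) else 0)"
      by simp
  qed
  also have "\<dots> = (\<Sum>k<m. \<Sum>l<m. v k * ((if k = l then 1 else 0) - 1 / real m) * v l)"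
    by (rule sum_restrict_lt[OF m(2)])
  also have "\<dots> = (\<Sum>k<m. v k * v k) - (\<Sum>k<m. v k) * (\<Sum>k<m. v k) / real m"
  proof -
    have "(\<Sum>k<m. \<Sum>l<m. v k * ((if k = l then 1 else 0) - 1 / real m) * v l)
        = (\<Sum>k<m. v k * v k - (\<Sum>l<m. v k * v l) / real m)"
    proof (rule sum.cong[OF refl])
      fix k assume k: "k \<in> {..<m}"
      have "(\<Sum>l<m. v k * ((if k = l then 1 else 0) - 1 / real m) * v l)
          = (\<Sum>l<m. (if k = l then v k * v l else 0) - v k * v l / real m)"
        by (intro sum.cong) (auto simp: algebra_simps)
      also have "\<dots> = v k * v k - (\<Sum>l<m. v k * v l) / real m"
        using k by (simp add: sum_subtractf sum_divide_distrib)
      finally show "(\<Sum>l<m. v k * ((if k = l then 1 else 0) - 1 / real m) * v l) = v k * v k - (\<Sum>l<m. v k * v l) / real m" .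
    qed
    also have "\<dots> = (\<Sum>k<m. v k * v k) - (\<Sum>k<m. v k) * (\<Sum>k<m. v k) / real m"
      by (simp add: sum_subtractf sum_divide_distrib[symmetric] sum_product)
    finally show ?thesis .
  qed
  also have "\<dots> = (\<Sum>i<m. (v i - (\<Sum>j<m. v j) / real m) * (v i - (\<Sum>j<m. v j) / real m))"
    using m by (simp add: cov_lemma)
  also have "\<dots> \<ge> 0" by (intro sum_nonneg) simp
  finally show ?thesis .
qed

lemma Wmat_psd:
  assumes c: "\<And>m. 1 \<le> m \<Longrightarrow> m \<le> p \<Longrightarrow> c m \<ge> 0"
  shows "(\<Sum>k<p. \<Sum>l<p. v k * Wmat p c $$ (k,l) * v l) \<ge> 0"
proof -
  have "(\<Sum>k<p. \<Sum>l<p. v k * Wmat p c $$ (k,l) * v l) = (\<Sum>k<p. \<Sum>l<p. \<Sum>m=1..p. c m * (v k * Bkp p m $$ (k,l) * v l))"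
    by (intro sum.cong refl) (simp add: Wmat_idx sum_distrib_left sum_distrib_right ac_simps)
  also have "\<dots> = (\<Sum>m=1..p. c m * (\<Sum>k<p. \<Sum>l<p. v k * Bkp p m $$ (k,l) * v l))"
    by (subst sum_swap3[symmetric]) (simp add: sum_distrib_left)
  also have "\<dots> \<ge> 0"
  proof (rule sum_nonneg)
    fix m assume m: "m \<in> {1..p}"
    show "0 \<le> c m * (\<Sum>k<p. \<Sum>l<p. v k * Bkp p m $$ (k,l) * v l)"
      using c[of m] Bkp_psd[of m p v] m by (auto intro!: mult_nonneg_nonneg)
  qed
  finally show ?thesis .
qed

lemma pow_diff_bound:
  fixes x y :: real
  assumes "0 \<le> x" "x \<le> y" "y \<le> 1"
  shows "y ^ N - x ^ N \<le> real N * (y - x)"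
proof -
  have "y ^ N - x ^ N = (y - x) * (\<Sum>i<N. x ^ (N - Suc i) * y ^ i)" by (rule power_diff_sumr2)
  also have "\<dots> \<le> (y - x) * (\<Sum>i<N. 1)"
    using assms by (intro mult_left_mono sum_mono mult_le_one power_le_one) auto
  finally show ?thesis by (simp add: mult.commute)
qed

lemma alpha_nonneg:
  assumes a0: "\<forall>i\<in>{1..p}. a i \<ge> 0" and a1: "(\<Sum>i=1..p. a i) = 1" and n: "n \<ge> 1"
    and m: "1 \<le> m" "m \<le> p"
  shows "alpha a n m \<ge> 0"
proof -
  define x where "x = asum a 1 (m-1)"
  define y where "y = asum a 1 m"
  have yx: "y = x + a m" using m unfolding x_def y_def asum_def
    by (cases m) auto
  have x0: "0 \<le> x" unfolding x_def asum_def using a0 m by (intro sum_nonneg) auto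
  have am: "0 \<le> a m" using a0 m by auto
  have "y \<le> (\<Sum>i=1..p. a i)" unfolding y_def asum_def using a0 m by (intro sum_mono2) auto
  hence y1: "y \<le> 1" using a1 by simp
  have "y ^ (n+1) - x ^ (n+1) \<le> real (n+1) * (y - x)"
    by (rule pow_diff_bound) (use x0 am yx y1 in auto)
  hence "0 \<le> real (n+1) * a m + x ^ (n+1) - y ^ (n+1)" using yx by simp
  thus ?thesis unfolding alpha_def x_def[symmetric] y_def[symmetric] by simp
qed



lemma Bcent_idx: "i < t \<Longrightarrow> j < t \<Longrightarrow> Bcent t $$ (i,j) = (if i = j then 1 else 0) - 1 / real t"
  by (simp add: Bcent_def)

lemma sum_cs_col: "j < t \<Longrightarrow> (\<Sum>i<t. if i = j then d else c) = d + (real t - 1) * (c::real)"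
proof -
  assume j: "j < t"
  have "(\<Sum>i<t. if i = j then d else c) = (\<Sum>i<t. if j = i then d else c)" by (intro sum.cong) auto
  thus ?thesis using sum_cs_row[OF j] by simp
qed

lemma mult_if_delta_left: "(if j = i then 1 else 0) * (x::real) = (if j = i then x else 0)" by simp
lemma Bcent_dims[simp]: "dim_row (Bcent t) = t" "dim_col (Bcent t) = t" by (simp_all add: Bcent_def)

lemma BM_idx:
  assumes M: "M \<in> carrier_mat t t" and i: "i < t" and j: "j < t"
  shows "(Bcent t * M) $$ (i,j) = M $$ (i,j) - (\<Sum>k<t. M $$ (k,j)) / real t"
proof -
  have "(Bcent t * M) $$ (i,j) = (\<Sum>k<t. ((if i = k then 1 else 0) - 1 / real t) * M $$ (k,j))"
    using M i j by (simp add: Bcent_def scalar_prod_def lessThan_atLeast0)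
  also have "\<dots> = (\<Sum>k<t. (if i = k then M $$ (k,j) else 0)) - (\<Sum>k<t. M $$ (k,j)) / real t"
    by (simp add: left_diff_distrib sum_subtractf sum_divide_distrib mult_if_delta_left)
  also have "\<dots> = M $$ (i,j) - (\<Sum>k<t. M $$ (k,j)) / real t" using i by simp
  finally show ?thesis .
qed

lemma cs_B:
  fixes M :: "real mat"
  assumes M: "M \<in> carrier_mat t t" and e: "\<And>i j. i < t \<Longrightarrow> j < t \<Longrightarrow> M $$ (i,j) = (if i = j then d else c)"
    and t: "t > 0"
  shows "Bcent t * M = (d - c) \<cdot>\<^sub>m Bcent t" "M * Bcent t = (d - c) \<cdot>\<^sub>m Bcent t"
proof -
  show "Bcent t * M = (d - c) \<cdot>\<^sub>m Bcent t"
  proof (rule eq_matI)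
    fix i j assume i: "i < dim_row ((d - c) \<cdot>\<^sub>m Bcent t)" and j: "j < dim_col ((d - c) \<cdot>\<^sub>m Bcent t)"
    hence i: "i < t" and j: "j < t" by (auto simp: Bcent_def)
    have "(\<Sum>k<t. M $$ (k,j)) = (\<Sum>k<t. if k = j then d else c)"
      by (rule sum.cong) (auto simp: e j)
    hence s: "(\<Sum>k<t. M $$ (k,j)) = d + (real t - 1) * c" using sum_cs_col[OF j, of d c] by simp
    have r: "((d - c) \<cdot>\<^sub>m Bcent t) $$ (i,j) = (d - c) * ((if i = j then 1 else 0) - 1 / real t)"
      using i j by (simp add: Bcent_idx)
    show "(Bcent t * M) $$ (i,j) = ((d - c) \<cdot>\<^sub>m Bcent t) $$ (i,j)"
      unfolding r BM_idx[OF M i j] e[OF i j] s using t by (cases "i = j") (simp_all add: field_simps)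
  qed (use M in \<open>auto simp: Bcent_def\<close>)
  show "M * Bcent t = (d - c) \<cdot>\<^sub>m Bcent t"
  proof (rule eq_matI)
    fix i j assume i: "i < dim_row ((d - c) \<cdot>\<^sub>m Bcent t)" and j: "j < dim_col ((d - c) \<cdot>\<^sub>m Bcent t)"
    hence i: "i < t" and j: "j < t" by (auto simp: Bcent_def)
    have "(\<Sum>k<t. M $$ (i,k)) = (\<Sum>k<t. if i = k then d else c)"
      by (rule sum.cong) (auto simp: e i)
    hence s: "(\<Sum>k<t. M $$ (i,k)) = d + (real t - 1) * c" using sum_cs_row[OF i, of d c] by simp
    have r: "((d - c) \<cdot>\<^sub>m Bcent t) $$ (i,j) = (d - c) * ((if i = j then 1 else 0) - 1 / real t)"
      using i j by (simp add: Bcent_idx)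
    show "(M * Bcent t) $$ (i,j) = ((d - c) \<cdot>\<^sub>m Bcent t) $$ (i,j)"
      unfolding r XB_idx[OF M i j] e[OF i j] s using t by (cases "i = j") (simp_all add: field_simps)
  qed (use M in \<open>auto simp: Bcent_def\<close>)
qed

lemma Bcent_idem: "t > 0 \<Longrightarrow> Bcent t * Bcent t = Bcent t"
proof -
  assume t: "t > 0"
  have "Bcent t * Bcent t = ((1 - 1 / real t) - (- 1 / real t)) \<cdot>\<^sub>m Bcent t"
    by (rule cs_B(1)[OF Bcent_carrier _ t]) (simp add: Bcent_idx)
  also have "\<dots> = Bcent t" by (rule eq_matI) auto
  finally show ?thesis .
qed



lemma smult_smult_mat: "(a::real) \<cdot>\<^sub>m (b \<cdot>\<^sub>m A) = (a * b) \<cdot>\<^sub>m A"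
  by (rule eq_matI) auto

lemma assoc5:
  fixes A B C D E :: "real mat"
  assumes A: "A \<in> carrier_mat t t" and B: "B \<in> carrier_mat t t" and C: "C \<in> carrier_mat t t"
    and D: "D \<in> carrier_mat t t" and E: "E \<in> carrier_mat t t"
  shows "A * (B * C * D) * E = A * B * C * (D * E)"
proof -
  have BC: "B * C \<in> carrier_mat t t" using B C by (rule mult_carrier_mat)
  have BCD: "B * C * D \<in> carrier_mat t t" using BC D by (rule mult_carrier_mat)
  have DE: "D * E \<in> carrier_mat t t" using D E by (rule mult_carrier_mat)
  have AB: "A * B \<in> carrier_mat t t" using A B by (rule mult_carrier_mat)
  have "A * (B * C * D) * E = A * ((B * C * D) * E)" by (rule assoc_mult_mat[OF A BCD E])
  also have "(B * C * D) * E = (B * C) * (D * E)" by (rule assoc_mult_mat[OF BC D E])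
  also have "A * ((B * C) * (D * E)) = (A * (B * C)) * (D * E)" by (rule assoc_mult_mat[OF A BC DE, symmetric])
  also have "A * (B * C) = A * B * C" by (rule assoc_mult_mat[OF A B C, symmetric])
  finally show ?thesis .
qed

lemma smult3:
  fixes B G :: "real mat"
  assumes B: "B \<in> carrier_mat t t" and G: "G \<in> carrier_mat t t"
  shows "(e \<cdot>\<^sub>m B) * G * (e \<cdot>\<^sub>m B) = (e * e) \<cdot>\<^sub>m (B * G * B)"
proof -
  have BG: "B * G \<in> carrier_mat t t" using B G by (rule mult_carrier_mat)
  have "(e \<cdot>\<^sub>m B) * G = e \<cdot>\<^sub>m (B * G)" by (rule mult_smult_assoc_mat[OF B G])
  hence "(e \<cdot>\<^sub>m B) * G * (e \<cdot>\<^sub>m B) = (e \<cdot>\<^sub>m (B * G)) * (e \<cdot>\<^sub>m B)" by simp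
  also have "\<dots> = e \<cdot>\<^sub>m ((B * G) * (e \<cdot>\<^sub>m B))" by (rule mult_smult_assoc_mat[OF BG smult_carrier_mat[OF B]])
  also have "(B * G) * (e \<cdot>\<^sub>m B) = e \<cdot>\<^sub>m ((B * G) * B)" by (rule mult_smult_distrib[OF BG B])
  finally show ?thesis by (simp add: smult_smult_mat)
qed

lemma G_lemma:
  fixes M G :: "real mat"
  assumes M: "M \<in> carrier_mat t t" and e: "\<And>i j. i < t \<Longrightarrow> j < t \<Longrightarrow> M $$ (i,j) = (if i = j then d else c)"
    and G: "G \<in> carrier_mat t t" and gi: "M * G * M = M" and t: "t > 0" and ne: "d - c \<noteq> 0"
  shows "Bcent t * G * Bcent t = (1 / (d - c)) \<cdot>\<^sub>m Bcent t"
proof -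
  have BM: "Bcent t * M = (d - c) \<cdot>\<^sub>m Bcent t" "M * Bcent t = (d - c) \<cdot>\<^sub>m Bcent t"
    by (rule cs_B(1)[OF M _ t], simp add: e) (rule cs_B(2)[OF M _ t], simp add: e)
  have Bc: "Bcent t \<in> carrier_mat t t" by simp
  have 1: "Bcent t * (M * G * M) * Bcent t = (d - c) \<cdot>\<^sub>m Bcent t"
  proof -
    have "Bcent t * (M * G * M) * Bcent t = (Bcent t * M) * Bcent t" by (simp only: gi)
    also have "\<dots> = (d - c) \<cdot>\<^sub>m (Bcent t * Bcent t)" unfolding BM(1) by (rule mult_smult_assoc_mat[OF Bc Bc])
    also have "\<dots> = (d - c) \<cdot>\<^sub>m Bcent t" using Bcent_idem[OF t] by simp
    finally show ?thesis .
  qed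
  have 2: "Bcent t * (M * G * M) * Bcent t = ((d - c) * (d - c)) \<cdot>\<^sub>m (Bcent t * G * Bcent t)"
  proof -
    have "Bcent t * (M * G * M) * Bcent t = (Bcent t * M) * G * (M * Bcent t)"
      by (rule assoc5[OF Bc M G M Bc])
    also have "\<dots> = ((d - c) \<cdot>\<^sub>m Bcent t) * G * ((d - c) \<cdot>\<^sub>m Bcent t)" unfolding BM ..
    also have "\<dots> = ((d - c) * (d - c)) \<cdot>\<^sub>m (Bcent t * G * Bcent t)"
      by (rule smult3[OF Bc G])
    finally show ?thesis .
  qed
  from 1 2 have 3: "((d - c) * (d - c)) \<cdot>\<^sub>m (Bcent t * G * Bcent t) = (d - c) \<cdot>\<^sub>m Bcent t" by simp

  show ?thesis
  proof (rule eq_matI)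
    fix i j assume i: "i < dim_row ((1 / (d - c)) \<cdot>\<^sub>m Bcent t)" and j: "j < dim_col ((1 / (d - c)) \<cdot>\<^sub>m Bcent t)"
    hence i: "i < t" and j: "j < t" by auto
    have "(((d - c) * (d - c)) \<cdot>\<^sub>m (Bcent t * G * Bcent t)) $$ (i,j) = ((d - c) \<cdot>\<^sub>m Bcent t) $$ (i,j)" using 3 by simp
    hence "(d - c) * (d - c) * (Bcent t * G * Bcent t) $$ (i,j) = (d - c) * Bcent t $$ (i,j)" using i j G by simp
    hence "(d - c) * ((d - c) * (Bcent t * G * Bcent t) $$ (i,j) - Bcent t $$ (i,j)) = 0"
      by (simp add: algebra_simps)
    hence "(d - c) * (Bcent t * G * Bcent t) $$ (i,j) = Bcent t $$ (i,j)" using ne by simp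
    hence "(Bcent t * G * Bcent t) $$ (i,j) = Bcent t $$ (i,j) / (d - c)" using ne by (simp add: field_simps)
    thus "(Bcent t * G * Bcent t) $$ (i,j) = ((1 / (d - c)) \<cdot>\<^sub>m Bcent t) $$ (i,j)"
      using i j by simp
  qed (use G in auto)
qed



lemma prod_carrier_t: "N \<in> carrier_mat p t \<Longrightarrow> A \<in> carrier_mat p p \<Longrightarrow> M \<in> carrier_mat p t \<Longrightarrow>
   transpose_mat N * A * M \<in> carrier_mat t t"
  by (metis mult_carrier_mat transpose_carrier_mat)

lemma mtrace_trip:
  assumes N: "N \<in> carrier_mat p t" and A: "A \<in> carrier_mat p p" and M: "M \<in> carrier_mat p t"
  shows "mtrace (transpose_mat N * A * M) = (\<Sum>i<t. trip p N A M i i)"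
  using mtrace_carrier[OF prod_carrier_t[OF N A M]] tAB_idx[OF N A M] by simp

lemma qs_Phi:
  assumes X: "X \<in> carrier_mat p t" and Y: "Y \<in> carrier_mat p t" and A: "A \<in> carrier_mat p p" and t: "t > 0"
  shows "mtrace (transpose_mat (X * Bcent t) * A * (Y * Bcent t)) = Phi t (trip p X A Y)"
  using mtrace_trip[OF XB_carrier[OF X] A XB_carrier[OF Y]] Phi_trip[OF X Y t] by simp

lemma Phi_cong: "(\<And>i j. i < t \<Longrightarrow> j < t \<Longrightarrow> m i j = m' i j) \<Longrightarrow> Phi t m = Phi t m'"
  unfolding Phi_def by (intro arg_cong2[where f="\<lambda>x y. x - y / real t"] sum.cong) auto

lemma msum_const_rows:
  assumes sym: "symmetric_design p t P" and X: "perm_inv p t X" and k: "k < p" and i: "i < t"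
  shows "msum p t P X p t $$ (k,i) = msum p t P X p t $$ (k,0)"
proof -
  let ?\<sigma> = "Transposition.transpose 0 i"
  have s: "?\<sigma> permutes {0..<t}" using i by (intro permutes_swap_id) auto
  have "?\<sigma> 0 = i" by (simp add: transpose_def)
  with msum_perm[OF sym X s k, of 0] i show ?thesis by simp
qed

lemma Phi_CC:
  assumes sym: "symmetric_design p t P" and X: "perm_inv p t X" and Y: "perm_inv p t Y"
    and Xc: "\<And>s. X s \<in> carrier_mat p t" and Yc: "\<And>s. Y s \<in> carrier_mat p t"
    and A: "A \<in> carrier_mat p p" and B: "B \<in> carrier_mat p p" and t: "t > 0"
  shows "Phi t (\<lambda>i j. CC p t n P X Y A B $$ (i,j)) = real n * (\<Sum>s\<in>Sset p t. P s * Phi t (trip p (X s) A (Y s)))"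
proof -
  have "Phi t (\<lambda>i j. CC p t n P X Y A B $$ (i,j)) = Phi t (\<lambda>i j. real n * ((\<Sum>s\<in>Sset p t. P s * trip p (X s) A (Y s) i j)
        - trip p (msum p t P X p t) B (msum p t P Y p t) i j))"
    by (rule Phi_cong) (rule CC_idx[OF Xc Yc A B])
  also have "\<dots> = real n * ((\<Sum>s\<in>Sset p t. P s * Phi t (trip p (X s) A (Y s))) - Phi t (trip p (msum p t P X p t) B (msum p t P Y p t)))"
    by (rule Phi_lin)
  also have "Phi t (trip p (msum p t P X p t) B (msum p t P Y p t)) = 0"
    by (rule Phi_const_rows[OF msum_carrier msum_carrier t msum_const_rows[OF sym X]])
  finally show ?thesis by simp
qed

lemma quad_nonneg:
  fixes A N M :: "real mat"
  assumes N: "N \<in> carrier_mat p t" and M: "M \<in> carrier_mat p t" and A: "A \<in> carrier_mat p p"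
    and sym: "\<And>k l. k < p \<Longrightarrow> l < p \<Longrightarrow> A $$ (k,l) = A $$ (l,k)"
    and psd: "\<And>v. (\<Sum>k<p. \<Sum>l<p. v k * A $$ (k,l) * v l) \<ge> 0"
  shows "mtrace (transpose_mat N * A * N) + 2 * x * mtrace (transpose_mat N * A * M) + x^2 * mtrace (transpose_mat M * A * M) \<ge> 0"
proof -
  have trm: "trip p N A N i i + 2 * x * trip p N A M i i + x^2 * trip p M A M i i
      = (\<Sum>k<p. \<Sum>l<p. (N $$ (k,i) + x * M $$ (k,i)) * A $$ (k,l) * (N $$ (l,i) + x * M $$ (l,i)))" for i
  proof -
    have sw: "(\<Sum>k<p. \<Sum>l<p. M $$ (k,i) * A $$ (k,l) * N $$ (l,i)) = trip p N A M i i"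
      unfolding trip_def
      by (subst sum.swap) (rule sum.cong[OF refl], rule sum.cong[OF refl], simp add: sym)
    have "(\<Sum>k<p. \<Sum>l<p. (N $$ (k,i) + x * M $$ (k,i)) * A $$ (k,l) * (N $$ (l,i) + x * M $$ (l,i)))
       = (\<Sum>k<p. \<Sum>l<p. N $$ (k,i) * A $$ (k,l) * N $$ (l,i)) + x * (\<Sum>k<p. \<Sum>l<p. N $$ (k,i) * A $$ (k,l) * M $$ (l,i))
         + x * (\<Sum>k<p. \<Sum>l<p. M $$ (k,i) * A $$ (k,l) * N $$ (l,i)) + x^2 * (\<Sum>k<p. \<Sum>l<p. M $$ (k,i) * A $$ (k,l) * M $$ (l,i))"
      by (simp add: sum.distrib sum_distrib_left algebra_simps power2_eq_square)
    thus ?thesis using sw unfolding trip_def by simp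
  qed
  have "mtrace (transpose_mat N * A * N) + 2 * x * mtrace (transpose_mat N * A * M) + x^2 * mtrace (transpose_mat M * A * M)
     = (\<Sum>i<t. trip p N A N i i + 2 * x * trip p N A M i i + x^2 * trip p M A M i i)"
    unfolding mtrace_trip[OF N A N] mtrace_trip[OF N A M] mtrace_trip[OF M A M]
    by (simp add: sum.distrib sum_distrib_left)
  also have "\<dots> \<ge> 0" unfolding trm
  proof (rule sum_nonneg)
    fix i show "0 \<le> (\<Sum>k<p. \<Sum>l<p. (N $$ (k,i) + x * M $$ (k,i)) * A $$ (k,l) * (N $$ (l,i) + x * M $$ (l,i)))"
      using psd[of "\<lambda>k. N $$ (k,i) + x * M $$ (k,i)"] by simp
  qed
  finally show ?thesis .
qed

lemma lin_nonneg_zero: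
  fixes a b :: real
  assumes "\<And>x. a + 2 * x * b \<ge> 0"
  shows "b = 0"
proof (rule ccontr)
  assume b: "b \<noteq> 0"
  have "a + 2 * (- (a + 1) / (2 * b)) * b \<ge> 0" by (rule assms)
  also have "a + 2 * (- (a + 1) / (2 * b)) * b = -1" using b by (simp add: field_simps)
  finally show False by simp
qed



lemma cs_sum_row0:
  assumes E: "\<And>i j. i < t \<Longrightarrow> j < t \<Longrightarrow> (C::real mat) $$ (i,j) = (if i = j then d else c)"
    and i: "i < t"
  shows "(\<Sum>j<t. C $$ (i,j)) = d + (real t - 1) * c"
proof -
  have "(\<Sum>j<t. C $$ (i,j)) = (\<Sum>j<t. if i = j then d else c)" using E i by (intro sum.cong) auto
  thus ?thesis using sum_cs_row[OF i] by simp
qed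

lemma cs_sum_col0:
  assumes E: "\<And>i j. i < t \<Longrightarrow> j < t \<Longrightarrow> (C::real mat) $$ (i,j) = (if i = j then d else c)"
    and j: "j < t"
  shows "(\<Sum>i<t. C $$ (i,j)) = d + (real t - 1) * c"
proof -
  have "(\<Sum>i<t. C $$ (i,j)) = (\<Sum>i<t. if i = j then d else c)" using E j by (intro sum.cong) auto
  thus ?thesis using sum_cs_col[OF j] by simp
qed

lemma part1:
  fixes p t n :: nat and a :: "nat \<Rightarrow> real" and P :: "nat list \<Rightarrow> real" and G :: "real mat"
  assumes t: "t \<ge> 2" and n: "n \<ge> 1" and a0: "\<forall>i\<in>{1..p}. a i \<ge> 0" and a1: "(\<Sum>i=1..p. a i) = 1"
    and d: "design p t P" and sym: "symmetric_design p t P" and gi: "ginverse (Cd22 a p t n P) G"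
  shows "completely_symmetric t (Cd a p t n P G) \<and> mtrace (Cd a p t n P G) = qstar a p t n P"
proof -
  define A where "A = Amat a p n"
  define B where "B = Bmat a p n"
  have Ac: "A \<in> carrier_mat p p" and Bc: "B \<in> carrier_mat p p" by (simp_all add: A_def B_def Amat_W Bmat_W)
  have Acol: "\<And>l. l < p \<Longrightarrow> (\<Sum>k<p. A $$ (k,l)) = 0" unfolding A_def Amat_W by (rule Wmat_colsum)
  have Arow: "\<And>k. k < p \<Longrightarrow> (\<Sum>l<p. A $$ (k,l)) = 0" unfolding A_def Amat_W by (rule Wmat_rowsum)
  have Bcol: "\<And>l. l < p \<Longrightarrow> (\<Sum>k<p. B $$ (k,l)) = 0" unfolding B_def Bmat_W by (rule Wmat_colsum)
  have Brow: "\<And>k. k < p \<Longrightarrow> (\<Sum>l<p. B $$ (k,l)) = 0" unfolding B_def Bmat_W by (rule Wmat_rowsum)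
  have Asym: "\<And>k l. k < p \<Longrightarrow> l < p \<Longrightarrow> A $$ (k,l) = A $$ (l,k)" unfolding A_def Amat_W by (rule Wmat_sym)
  have Apsd: "\<And>v. (\<Sum>k<p. \<Sum>l<p. v k * A $$ (k,l) * v l) \<ge> 0"
    unfolding A_def Amat_W by (rule Wmat_psd) (rule alpha_nonneg[OF a0 a1 n], auto)
  have t0: "t > 0" using t by simp
  have Tc: "\<And>s. Tm p t s \<in> carrier_mat p t" and Fc: "\<And>s. Fm p t s \<in> carrier_mat p t" by simp_all
  define C11 where "C11 = CC p t n P (Tm p t) (Tm p t) A B"
  define C12 where "C12 = CC p t n P (Tm p t) (Fm p t) A B"
  define C22 where "C22 = CC p t n P (Fm p t) (Fm p t) A B"
  have Cd11e: "Cd11 a p t n P = C11" by (simp add: Cd11_CC C11_def A_def B_def)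
  have Cd12e: "Cd12 a p t n P = C12" by (simp add: Cd12_CC C12_def A_def B_def)
  have Cd22e: "Cd22 a p t n P = C22" by (simp add: Cd22_CC C22_def A_def B_def)
  define D1 where "D1 = C11 $$ (0,0)"
  define O1 where "O1 = C11 $$ (0,1)"
  define D2 where "D2 = C12 $$ (0,0)"
  define O2 where "O2 = C12 $$ (0,1)"
  define D3 where "D3 = C22 $$ (0,0)"
  define O3 where "O3 = C22 $$ (0,1)"
  have E11: "\<And>i j. i < t \<Longrightarrow> j < t \<Longrightarrow> C11 $$ (i,j) = (if i = j then D1 else O1)"
    unfolding C11_def D1_def O1_def by (rule CC_cs_entries[OF sym perm_inv_Tm perm_inv_Tm Tc Tc Ac Bc t])
  have E12: "\<And>i j. i < t \<Longrightarrow> j < t \<Longrightarrow> C12 $$ (i,j) = (if i = j then D2 else O2)"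
    unfolding C12_def D2_def O2_def by (rule CC_cs_entries[OF sym perm_inv_Tm perm_inv_Fm Tc Fc Ac Bc t])
  have E22: "\<And>i j. i < t \<Longrightarrow> j < t \<Longrightarrow> C22 $$ (i,j) = (if i = j then D3 else O3)"
    unfolding C22_def D3_def O3_def by (rule CC_cs_entries[OF sym perm_inv_Fm perm_inv_Fm Fc Fc Ac Bc t])
  have qsTT: "\<And>s. mtrace (transpose_mat (Tm p t s * Bcent t) * A * (Tm p t s * Bcent t)) = Phi t (trip p (Tm p t s) A (Tm p t s))"
    by (rule qs_Phi[OF Tc Tc Ac t0])
  have qsTF: "\<And>s. mtrace (transpose_mat (Tm p t s * Bcent t) * A * (Fm p t s * Bcent t)) = Phi t (trip p (Tm p t s) A (Fm p t s))"
    by (rule qs_Phi[OF Tc Fc Ac t0])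
  have qsFF: "\<And>s. mtrace (transpose_mat (Fm p t s * Bcent t) * A * (Fm p t s * Bcent t)) = Phi t (trip p (Fm p t s) A (Fm p t s))"
    by (rule qs_Phi[OF Fc Fc Ac t0])
  have q11: "qd11 a p t n P = (real t - 1) * (D1 - O1)"
  proof -
    have "qd11 a p t n P = Phi t (\<lambda>i j. C11 $$ (i,j))"
      unfolding qd11_def qs11_def C11_def A_def[symmetric]
      using qsTT Phi_CC[OF sym perm_inv_Tm perm_inv_Tm Tc Tc Ac Bc t0] by simp
    also have "\<dots> = Phi t (\<lambda>i j. if i = j then D1 else O1)" by (rule Phi_cong) (rule E11)
    finally show ?thesis using Phi_cs[OF t0] by simp
  qed
  have q12: "qd12 a p t n P = (real t - 1) * (D2 - O2)"
  proof -
    have "qd12 a p t n P = Phi t (\<lambda>i j. C12 $$ (i,j))"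
      unfolding qd12_def qs12_def C12_def A_def[symmetric]
      using qsTF Phi_CC[OF sym perm_inv_Tm perm_inv_Fm Tc Fc Ac Bc t0] by simp
    also have "\<dots> = Phi t (\<lambda>i j. if i = j then D2 else O2)" by (rule Phi_cong) (rule E12)
    finally show ?thesis using Phi_cs[OF t0] by simp
  qed
  have q22: "qd22 a p t n P = (real t - 1) * (D3 - O3)"
  proof -
    have "qd22 a p t n P = Phi t (\<lambda>i j. C22 $$ (i,j))"
      unfolding qd22_def qs22_def C22_def A_def[symmetric]
      using qsFF Phi_CC[OF sym perm_inv_Fm perm_inv_Fm Fc Fc Ac Bc t0] by simp
    also have "\<dots> = Phi t (\<lambda>i j. if i = j then D3 else O3)" by (rule Phi_cong) (rule E22)
    finally show ?thesis using Phi_cs[OF t0] by simp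
  qed
  have R1: "D1 + (real t - 1) * O1 = 0"
    using CC_rowsum[OF d Tc Tc Ac Bc Tm_rowsum Arow Brow t0, where n=n] cs_sum_row0[OF E11 t0]
    by (simp add: C11_def)
  have R2: "D2 + (real t - 1) * O2 = 0"
    using CC_colsum[OF d Tc Fc Ac Bc Tm_rowsum Acol Bcol t0, where n=n] cs_sum_col0[OF E12 t0]
    by (simp add: C12_def)
  have C11c: "C11 \<in> carrier_mat t t" and C12c: "C12 \<in> carrier_mat t t" and C22c: "C22 \<in> carrier_mat t t"
    by (simp_all add: C11_def C12_def C22_def)
  have Gc: "G \<in> carrier_mat t t" and gi': "C22 * G * C22 = C22"
    using gi C22c unfolding ginverse_def Cd22e by auto
  define c where "c = D2 - O2"
  define e where "e = D3 - O3"
  have C12B: "C12 = c \<cdot>\<^sub>m Bcent t"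
  proof (rule eq_matI)
    fix i j assume "i < dim_row (c \<cdot>\<^sub>m Bcent t)" "j < dim_col (c \<cdot>\<^sub>m Bcent t)"
    hence i: "i < t" and j: "j < t" by auto
    show "C12 $$ (i,j) = (c \<cdot>\<^sub>m Bcent t) $$ (i,j)"
      using E12[OF i j] i j R2 t0 by (cases "i = j") (simp_all add: Bcent_idx c_def field_simps)
  qed (use C12c in auto)
  have C21B: "Cd21 a p t n P = c \<cdot>\<^sub>m Bcent t"
  proof (rule eq_matI)
    fix i j assume "i < dim_row (c \<cdot>\<^sub>m Bcent t)" "j < dim_col (c \<cdot>\<^sub>m Bcent t)"
    hence i: "i < t" and j: "j < t" by auto
    show "Cd21 a p t n P $$ (i,j) = (c \<cdot>\<^sub>m Bcent t) $$ (i,j)"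
      unfolding Cd21_def Cd12e C12B using i j by (simp add: Bcent_idx)
  qed (simp_all add: Cd21_def Cd12e C12B)
  have quad: "qd11 a p t n P + 2 * x * qd12 a p t n P + x^2 * qd22 a p t n P \<ge> 0" for x
  proof -
    have "qd11 a p t n P + 2 * x * qd12 a p t n P + x^2 * qd22 a p t n P
        = real n * (\<Sum>s\<in>Sset p t. P s * (qs11 a p t n s + 2 * x * qs12 a p t n s + x^2 * qs22 a p t n s))"
      unfolding qd11_def qd12_def qd22_def
      by (simp add: algebra_simps sum.distrib sum_distrib_left)
    also have "\<dots> \<ge> 0"
    proof (intro mult_nonneg_nonneg sum_nonneg)
      fix s assume s: "s \<in> Sset p t"
      show "0 \<le> P s" using d s by (simp add: design_def)
      show "0 \<le> qs11 a p t n s + 2 * x * qs12 a p t n s + x^2 * qs22 a p t n s"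
        unfolding qs11_def qs12_def qs22_def A_def[symmetric]
        by (rule quad_nonneg[OF XB_carrier[OF Tc] XB_carrier[OF Fc] Ac Asym Apsd])
    qed simp
    finally show ?thesis .
  qed
  have e0: "c = 0" if "e = 0"
  proof -
    have "qd22 a p t n P = 0" using q22 that by (simp add: e_def)
    hence "qd12 a p t n P = 0" using quad by (intro lin_nonneg_zero[of "qd11 a p t n P"]) simp
    thus ?thesis using q12 t by (simp add: c_def)
  qed
  define k where "k = c * c / e"
  have PG: "C12 * G * Cd21 a p t n P = k \<cdot>\<^sub>m Bcent t"
  proof -
    have "C12 * G * Cd21 a p t n P = (c * c) \<cdot>\<^sub>m (Bcent t * G * Bcent t)"
      unfolding C12B C21B by (rule smult3[OF Bcent_carrier Gc])
    also have "\<dots> = k \<cdot>\<^sub>m Bcent t"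
    proof (cases "e = 0")
      case True
      hence "c = 0" by (rule e0)
      thus ?thesis using Gc by (intro eq_matI) (auto simp: k_def)
    next
      case False
      have ne: "D3 - O3 \<noteq> 0" using False unfolding e_def .
      have "Bcent t * G * Bcent t = (1 / (D3 - O3)) \<cdot>\<^sub>m Bcent t"
        by (rule G_lemma[OF C22c E22 Gc gi' t0 ne])
      thus ?thesis by (simp add: smult_smult_mat k_def e_def)
    qed
    finally show ?thesis .
  qed
  have Cdeq: "Cd a p t n P G = C11 - k \<cdot>\<^sub>m Bcent t"
    unfolding Cd_def Cd11e Cd12e PG ..
  have Cdc: "Cd a p t n P G \<in> carrier_mat t t" unfolding Cdeq using C11c by (simp add: minus_carrier_mat)
  define x where "x = D1 - k * (1 - 1 / real t)"
  define y where "y = O1 + k / real t"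
  have ECd: "\<And>i j. i < t \<Longrightarrow> j < t \<Longrightarrow> Cd a p t n P G $$ (i,j) = (if i = j then x else y)"
  proof -
    fix i j assume i: "i < t" and j: "j < t"
    show "Cd a p t n P G $$ (i,j) = (if i = j then x else y)"
      unfolding Cdeq using i j C11c E11[OF i j] by (simp add: Bcent_idx x_def y_def)
  qed
  have cs: "completely_symmetric t (Cd a p t n P G)"
    unfolding completely_symmetric_def using cs_form[OF Cdc ECd] by blast
  have tr: "mtrace (Cd a p t n P G) = real t * x"
  proof -
    have "mtrace (Cd a p t n P G) = (\<Sum>i<t. Cd a p t n P G $$ (i,i))" by (rule mtrace_carrier[OF Cdc])
    also have "\<dots> = (\<Sum>i<t. x)" using ECd by (intro sum.cong) auto
    finally show ?thesis by simp
  qed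
  have frac: "((real t - 1) * c)^2 / ((real t - 1) * e) = (real t - 1) * k"
  proof (cases "e = 0")
    case True thus ?thesis by (simp add: k_def)
  next
    case False
    have "real t - 1 \<noteq> 0" using t by simp
    thus ?thesis using False by (simp add: k_def field_simps power2_eq_square)
  qed
  have "qstar a p t n P = (real t - 1) * (D1 - O1) - (real t - 1) * k"
    unfolding qstar_def q11 q12 q22 c_def[symmetric] e_def[symmetric] frac ..
  also have "\<dots> = real t * x" using R1 t0 by (simp add: x_def field_simps)
  finally show ?thesis using cs tr by simp
qed



lemma sum_perm_lt:
  fixes \<sigma> :: "nat \<Rightarrow> nat"
  assumes s: "\<sigma> permutes {0..<t}"
  shows "(\<Sum>i<t. f (\<sigma> i)) = (\<Sum>i<t. (f i :: real))"
  by (rule sum.reindex_bij_witness[where i="Hilbert_Choice.inv \<sigma>" and j=\<sigma>])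
     (use permutes_inverses[OF s] perm_lt[OF s] perm_lt[OF permutes_inv[OF s]] in auto)

lemma Phi_perm:
  fixes \<sigma> :: "nat \<Rightarrow> nat"
  assumes s: "\<sigma> permutes {0..<t}"
  shows "Phi t (\<lambda>i j. m (\<sigma> i) (\<sigma> j)) = Phi t m"
proof -
  have 1: "(\<Sum>i<t. m (\<sigma> i) (\<sigma> i)) = (\<Sum>i<t. m i i)" by (rule sum_perm_lt[OF s, of "\<lambda>i. m i i"])
  have "(\<Sum>i<t. \<Sum>j<t. m (\<sigma> i) (\<sigma> j)) = (\<Sum>i<t. \<Sum>j<t. m (\<sigma> i) j)"
    by (rule sum.cong[OF refl], rule sum_perm_lt[OF s])
  also have "\<dots> = (\<Sum>i<t. \<Sum>j<t. m i j)" by (rule sum_perm_lt[OF s, of "\<lambda>i. \<Sum>j<t. m i j"])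
  finally show ?thesis unfolding Phi_def 1 by simp
qed

lemma Phi_trip_perm:
  assumes X: "perm_inv p t X" and Y: "perm_inv p t Y" and \<sigma>: "\<sigma> permutes {0..<t}" and s: "s \<in> Sset p t"
  shows "Phi t (trip p (X (map \<sigma> s)) A (Y (map \<sigma> s))) = Phi t (trip p (X s) A (Y s))"
proof -
  have "Phi t (trip p (X (map \<sigma> s)) A (Y (map \<sigma> s))) = Phi t (\<lambda>i j. trip p (X (map \<sigma> s)) A (Y (map \<sigma> s)) (\<sigma> i) (\<sigma> j))"
    by (rule Phi_perm[OF \<sigma>, symmetric])
  also have "\<dots> = Phi t (trip p (X s) A (Y s))"
    by (rule Phi_cong) (use X Y \<sigma> s in \<open>simp add: perm_inv_def trip_def\<close>)
  finally show ?thesis .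
qed

definition symz :: "nat \<Rightarrow> (nat list \<Rightarrow> real) \<Rightarrow> nat list \<Rightarrow> real" where
  "symz t P s = (\<Sum>\<sigma>\<in>{\<sigma>. \<sigma> permutes {0..<t}}. P (map \<sigma> s)) / fact t"

lemma symz_sum:
  assumes q: "\<And>\<sigma> s. \<sigma> permutes {0..<t} \<Longrightarrow> s \<in> Sset p t \<Longrightarrow> q (map \<sigma> s) = q s"
  shows "(\<Sum>s\<in>Sset p t. symz t P s * q s) = (\<Sum>s\<in>Sset p t. P s * (q s :: real))"
proof -
  let ?S = "{\<sigma>. \<sigma> permutes {0..<t}}"
  have fin: "finite ?S" by (rule finite_permutations) simp
  have card: "card ?S = fact t" by (rule card_permutations) simp_all
  have "(\<Sum>s\<in>Sset p t. symz t P s * q s) = (\<Sum>s\<in>Sset p t. \<Sum>\<sigma>\<in>?S. P (map \<sigma> s) * q s) / fact t"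
    unfolding symz_def by (simp add: sum_divide_distrib sum_distrib_right)
  also have "(\<Sum>s\<in>Sset p t. \<Sum>\<sigma>\<in>?S. P (map \<sigma> s) * q s) = (\<Sum>\<sigma>\<in>?S. \<Sum>s\<in>Sset p t. P (map \<sigma> s) * q s)"
    by (rule sum.swap)
  also have "\<dots> = (\<Sum>\<sigma>\<in>?S. \<Sum>s\<in>Sset p t. P (map \<sigma> s) * q (map \<sigma> s))"
    by (rule sum.cong[OF refl], rule sum.cong[OF refl]) (simp add: q)
  also have "\<dots> = (\<Sum>\<sigma>\<in>?S. \<Sum>s\<in>Sset p t. P s * q s)"
  proof (rule sum.cong[OF refl])
    fix \<sigma> assume "\<sigma> \<in> ?S"
    thus "(\<Sum>s\<in>Sset p t. P (map \<sigma> s) * q (map \<sigma> s)) = (\<Sum>s\<in>Sset p t. P s * q s)"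
      using sum_Sset_perm[where h="\<lambda>s. P s * q s"] by simp
  qed
  also have "(\<Sum>\<sigma>\<in>?S. \<Sum>s\<in>Sset p t. P s * q s) = fact t * (\<Sum>s\<in>Sset p t. P s * q s)"
    using card by simp
  finally show ?thesis by simp
qed

lemma part3:
  fixes p t n :: nat and a :: "nat \<Rightarrow> real" and P :: "nat list \<Rightarrow> real"
  assumes t: "t \<ge> 2" and d: "design p t P"
  shows "\<exists>P'. design p t P' \<and> symmetric_design p t P' \<and> qstar a p t n P' = qstar a p t n P"
proof (intro exI conjI)
  let ?S = "{\<sigma>. \<sigma> permutes {0..<t}}"
  have t0: "t > 0" using t by simp
  show "design p t (symz t P)"
    unfolding design_def
  proof
    show "\<forall>s\<in>Sset p t. 0 \<le> symz t P s"
      using d map_perm_Sset unfolding design_def symz_def by (auto intro!: sum_nonneg divide_nonneg_nonneg)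
    show "(\<Sum>s\<in>Sset p t. symz t P s) = 1"
      using symz_sum[of t p "\<lambda>_. 1" P] d by (simp add: design_def)
  qed
  show "symmetric_design p t (symz t P)"
    unfolding symmetric_design_def
  proof (intro allI impI ballI)
    fix \<tau> s assume \<tau>: "\<tau> permutes {0..<t}" and s: "s \<in> Sset p t"
    have "(\<Sum>\<sigma>\<in>?S. P (map \<sigma> s)) = (\<Sum>\<sigma>\<in>?S. P (map (\<sigma> \<circ> \<tau>) s))"
      by (rule sum_permutations_compose_right[OF \<tau>])
    thus "symz t P (map \<tau> s) = symz t P s" unfolding symz_def by simp
  qed
  have Tc: "\<And>s. Tm p t s \<in> carrier_mat p t" and Fc: "\<And>s. Fm p t s \<in> carrier_mat p t" by simp_all
  have Ac: "Amat a p n \<in> carrier_mat p p" by (simp add: Amat_W)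
  have inv: "q (map \<sigma> s) = q s"
    if "q = (\<lambda>s. Phi t (trip p (X s) (Amat a p n) (Y s)))" "perm_inv p t X" "perm_inv p t Y"
       "\<sigma> permutes {0..<t}" "s \<in> Sset p t" for q X Y \<sigma> s
    using Phi_trip_perm[OF that(2,3,4,5)] that(1) by simp
  have e11: "qs11 a p t n = (\<lambda>s. Phi t (trip p (Tm p t s) (Amat a p n) (Tm p t s)))"
    unfolding qs11_def by (rule ext) (rule qs_Phi[OF Tc Tc Ac t0])
  have e12: "qs12 a p t n = (\<lambda>s. Phi t (trip p (Tm p t s) (Amat a p n) (Fm p t s)))"
    unfolding qs12_def by (rule ext) (rule qs_Phi[OF Tc Fc Ac t0])
  have e22: "qs22 a p t n = (\<lambda>s. Phi t (trip p (Fm p t s) (Amat a p n) (Fm p t s)))"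
    unfolding qs22_def by (rule ext) (rule qs_Phi[OF Fc Fc Ac t0])
  have "qd11 a p t n (symz t P) = qd11 a p t n P"
    unfolding qd11_def using symz_sum[OF inv[OF e11 perm_inv_Tm perm_inv_Tm]] by simp
  moreover have "qd12 a p t n (symz t P) = qd12 a p t n P"
    unfolding qd12_def using symz_sum[OF inv[OF e12 perm_inv_Tm perm_inv_Fm]] by simp
  moreover have "qd22 a p t n (symz t P) = qd22 a p t n P"
    unfolding qd22_def using symz_sum[OF inv[OF e22 perm_inv_Fm perm_inv_Fm]] by simp
  ultimately show "qstar a p t n (symz t P) = qstar a p t n P" unfolding qstar_def by simp
qed


theorem theorem3p2:
  fixes p t n :: nat and a :: "nat \<Rightarrow> real"
  assumes "p \<ge> 2" and "t \<ge> 2" and "n \<ge> 1"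
    and "\<forall>i\<in>{1..p}. a i \<ge> 0" and "(\<Sum>i=1..p. a i) = 1"
  shows "(\<forall>P G. design p t P \<and> symmetric_design p t P \<and> ginverse (Cd22 a p t n P) G \<longrightarrow>
            completely_symmetric t (Cd a p t n P G) \<and>
            mtrace (Cd a p t n P G) = qstar a p t n P)
       \<and> (\<forall>P. design p t P \<longrightarrow>
            (\<exists>P'. design p t P' \<and> symmetric_design p t P' \<and> qstar a p t n P' = qstar a p t n P))"
proof (rule conjI)
  show "\<forall>P G. design p t P \<and> symmetric_design p t P \<and> ginverse (Cd22 a p t n P) G \<longrightarrow>
            completely_symmetric t (Cd a p t n P G) \<and> mtrace (Cd a p t n P G) = qstar a p t n P"
    using part1[OF assms(2,3,4,5)] by blast
  show "\<forall>P. design p t P \<longrightarrow>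
            (\<exists>P'. design p t P' \<and> symmetric_design p t P' \<and> qstar a p t n P' = qstar a p t n P)"
    using part3[OF assms(2)] by blast
qed

end
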